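(* Let $\phi,\alpha\in[0,\pi/2]$, $\beta\in[0,2\pi]$, and let $|\psi_1\rangle=\frac{1}{\sqrt2}(|00\rangle+|11\rangle)$ and $|\psi_2\rangle=\cos\phi(\cos\alpha|01\rangle+\sin\alpha|10\rangle)+e^{i\beta}\frac{\sin\phi}{\sqrt2}(|00\rangle-|11\rangle)$. Then there exist single-qubit unitaries $\mathcal V_a,\mathcal V_b$, a real phase $\zeta$ and an angle $\theta'\in[0,\pi/2]$ such that $(\mathcal V_a\otimes\mathcal V_b)|\psi_1\rangle=\frac{1}{\sqrt2}(|01\rangle+|10\rangle)$ and $(\mathcal V_a\otimes\mathcal V_b)|\psi_2\rangle=e^{i\zeta}(\cos\theta'|00\rangle+\sin\theta'|11\rangle)$, where $\sin2\theta'=\left|e^{2i\beta}\sin^2\phi+\cos^2\phi\sin2\alpha\right|$. Consequently, for any $\nu_1,\nu_2\in[0,1]$ with $\nu_1+\nu_2=1$, the state $\nu_1|\psi_1\rangle\langle\psi_1|+\nu_2|\psi_2\rangle\langle\psi_2|$ is locally unitarily equivalent to $\nu_2|\psi_1'\rangle\langle\psi_1'|+\nu_1|\psi_2'\rangle\langle\psi_2'|$ with $|\psi_1'\rangle=\cos\theta'|00\rangle+\sin\theta'|11\rangle$ and $|\psi_2'\rangle=\frac1{\sqrt2}(|01\rangle+|10\rangle)$.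
   Context: Qubits are labelled so that the first tensor factor belongs to Alice and the second to Bob; $\{|0\rangle,|1\rangle\}$ is the computational basis and $|ij\rangle=|i\rangle\otimes|j\rangle$. *)

theory Defs
  imports "HOL-Analysis.Analysis" "HOL-Library.Numeral_Type"
begin

text \<open>Two-qubit states are functions on 2 \<times> 2, the first
  component being Alice's qubit: psi (i,j) is the coefficient of |ij>.\<close>

type_synonym qop = "2 \<Rightarrow> 2 \<Rightarrow> complex"
type_synonym state2 = "2 \<times> 2 \<Rightarrow> complex"
type_synonym op2 = "2 \<times> 2 \<Rightarrow> 2 \<times> 2 \<Rightarrow> complex"

definition unitary1 :: "qop \<Rightarrow> bool" where
  "unitary1 U \<longleftrightarrow>
     (\<forall>i j. (\<Sum>k\<in>UNIV. U i k * cnj (U j k)) = (if i = j then 1 else 0)) \<and>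
     (\<forall>i j. (\<Sum>k\<in>UNIV. cnj (U k i) * U k j) = (if i = j then 1 else 0))"

definition ket2 :: "2 \<Rightarrow> 2 \<Rightarrow> state2" where
  "ket2 i j = (\<lambda>p. if p = (i, j) then 1 else 0)"

definition tensor :: "qop \<Rightarrow> qop \<Rightarrow> op2" where
  "tensor A B = (\<lambda>(i, j) (k, l). A i k * B j l)"

definition apply_op :: "op2 \<Rightarrow> state2 \<Rightarrow> state2" where
  "apply_op M v = (\<lambda>p. \<Sum>q\<in>UNIV. M p q * v q)"

definition mat_mult2 :: "op2 \<Rightarrow> op2 \<Rightarrow> op2" where
  "mat_mult2 M N = (\<lambda>p r. \<Sum>q\<in>UNIV. M p q * N q r)"

definition adjoint2 :: "op2 \<Rightarrow> op2" where
  "adjoint2 M = (\<lambda>p q. cnj (M q p))"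

definition projector :: "state2 \<Rightarrow> op2" where
  "projector v = (\<lambda>p q. v p * cnj (v q))"

definition add_op :: "op2 \<Rightarrow> op2 \<Rightarrow> op2" where
  "add_op M N = (\<lambda>p q. M p q + N p q)"

definition scale_op :: "real \<Rightarrow> op2 \<Rightarrow> op2" where
  "scale_op c M = (\<lambda>p q. complex_of_real c * M p q)"

definition add_st :: "state2 \<Rightarrow> state2 \<Rightarrow> state2" where
  "add_st v w = (\<lambda>p. v p + w p)"

definition scale_st :: "complex \<Rightarrow> state2 \<Rightarrow> state2" where
  "scale_st c v = (\<lambda>p. c * v p)"

definition loc_unitary_equiv :: "op2 \<Rightarrow> op2 \<Rightarrow> bool" where
  "loc_unitary_equiv rho rho2 \<longleftrightarrow>
     (\<exists>Ua Ub. unitary1 Ua \<and> unitary1 Ub \<and>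
        mat_mult2 (mat_mult2 (tensor Ua Ub) rho) (adjoint2 (tensor Ua Ub)) = rho2)"

end

theory Submission
  imports Defs
begin

lemma zero_diag:
  fixes p q r :: complex
  shows "\<exists>a b. a*cnj a + b*cnj b = 1 \<and> p*(a*cnj a - b*cnj b) + q*cnj a*b + r*cnj b*a = 0"
proof (cases "p = 0")
  case True
  then show ?thesis by (intro exI[of _ 1] exI[of _ 0]) simp
next
  case False
  define u where "u = cnj p * q"
  define w where "w = cnj p * r"
  define C where "C = Im u + Im w"
  define D where "D = Re u - Re w"
  obtain e where e1: "e * cnj e = 1" and eim: "Im (u*e + w*cnj e) = 0"
  proof (cases "C = 0 \<and> D = 0")
    case True
    then show ?thesis by (intro that[of 1]) (auto simp: C_def)
  next
    case False
    define n where "n = sqrt (D^2 + C^2)"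
    have "D^2 + C^2 > 0" using False by (auto simp add: sum_power2_gt_zero_iff)
    then have npos: "n > 0" unfolding n_def by simp
    have nsq: "n^2 = D^2 + C^2" unfolding n_def by simp
    show ?thesis
    proof (rule that[of "Complex (D/n) (-C/n)"])
      show "Complex (D/n) (-C/n) * cnj (Complex (D/n) (-C/n)) = 1"
        using False \<open>D^2 + C^2 > 0\<close> nsq by (simp add: complex_eq_iff power2_eq_square add_divide_distrib[symmetric] add.commute)
      show "Im (u * Complex (D / n) (- C / n) + w * cnj (Complex (D / n) (- C / n))) = 0"
        using npos by (simp add: C_def D_def field_simps)
    qed
  qed
  define g where "g = q*e + r*cnj e"
  define T where "T = Re (cnj p * g)"
  have cg: "cnj p * g = of_real T"
    using eim unfolding T_def g_def u_def w_def by (simp add: complex_eq_iff algebra_simps)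
  define t where "t = T / (cmod p)^2"
  have pp: "p * cnj p = of_real ((cmod p)^2)" by (rule complex_norm_square[symmetric])
  have pos: "(cmod p)^2 > 0" using False by simp
  have gt: "g = of_real t * p"
  proof -
    have "of_real ((cmod p)^2) * g = (p * cnj p) * g" using pp by simp
    also have "\<dots> = p * (cnj p * g)" by (simp add: mult.assoc)
    also have "\<dots> = of_real T * p" using cg by simp
    finally have h: "of_real ((cmod p)^2) * g = of_real T * p" .
    have nz: "of_real ((cmod p)^2) \<noteq> (0::complex)" using pos by (simp del: of_real_power)
    have "g = of_real T * p / of_real ((cmod p)^2)" using h nz
      by (simp add: eq_divide_eq mult.commute del: of_real_power)
    then show ?thesis unfolding t_def by (simp del: of_real_power)
  qed
  define a0 where "a0 = (-t + sqrt (t^2+4))/2"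
  have a0eq: "a0^2 + t*a0 - 1 = 0"
  proof -
    have "sqrt (t^2+4)^2 = t^2+4" by simp
    then show ?thesis unfolding a0_def by (simp add: power2_eq_square field_simps) 
  qed
  define n where "n = sqrt (a0^2 + 1)"
  have npos: "n > 0" unfolding n_def by (simp add: add_nonneg_pos)
  have nsq: "n^2 = a0^2 + 1" unfolding n_def by simp
  have nsq': "complex_of_real n * complex_of_real n = 1 + complex_of_real a0 * complex_of_real a0"
    using nsq by (metis add.commute of_real_1 of_real_add of_real_mult power2_eq_square)
  show ?thesis
  proof (intro exI conjI)
    have nz: "complex_of_real n \<noteq> 0" using npos by simp
    have "of_real (a0/n) * cnj (of_real (a0/n)) + (e/of_real n) * cnj (e/of_real n)
       = (of_real a0 * of_real a0 + e * cnj e) / (of_real n * of_real n)"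
      using nz by (simp add: divide_simps)
    also have "\<dots> = 1" using nsq' e1 nz by (metis add.commute div_self mult_eq_0_iff)
    finally show "of_real (a0/n) * cnj (of_real (a0/n)) + (e/of_real n) * cnj (e/of_real n) = 1" .
    have "p * (of_real (a0/n) * cnj (of_real (a0/n)) - (e/of_real n) * cnj (e/of_real n)) +
      q * cnj (of_real (a0/n)) * (e/of_real n) + r * cnj (e/of_real n) * of_real (a0/n)
      = (p * (of_real a0^2 - e * cnj e) + of_real a0 * g) / (of_real n)^2"
      using npos unfolding g_def by (simp add: field_simps power2_eq_square)
    also have "\<dots> = (p * (of_real (a0^2 - 1)) + of_real a0 * of_real t * p) / (of_real n)^2"
      using e1 gt by simp
    also have "\<dots> = p * of_real (a0^2 + t*a0 - 1) / (of_real n)^2"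
      by (simp add: algebra_simps)
    also have "\<dots> = 0" using a0eq by simp
    finally show "p * (of_real (a0/n) * cnj (of_real (a0/n)) - (e/of_real n) * cnj (e/of_real n)) +
      q * cnj (of_real (a0/n)) * (e/of_real n) + r * cnj (e/of_real n) * of_real (a0/n) = 0" .
  qed
qed
lemma U2: "(UNIV::2 set) = {0,1}"
  using exhaust_2 by (auto, metis zero_neq_one)
lemma ex2: "(x::2) = 0 \<or> x = 1" using U2 by auto
lemma s2: "(\<Sum>k\<in>(UNIV::2 set). f k) = f 0 + f 1"
  by (simp add: U2)
lemma all2: "(\<forall>x::2. P x) \<longleftrightarrow> P 0 \<and> P 1" by (metis ex2)
lemma s22: "(\<Sum>k\<in>(UNIV::(2\<times>2) set). f k) = f (0,0) + f (0,1) + f (1,0) + f(1,1)"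
  by (simp add: UNIV_Times_UNIV[symmetric, of] U2 add.assoc del: UNIV_Times_UNIV)

definition mk :: "complex \<Rightarrow> complex \<Rightarrow> complex \<Rightarrow> complex \<Rightarrow> qop" where
  "mk a b c d = (\<lambda>i j. if i = 0 then (if j = 0 then a else b) else (if j = 0 then c else d))"
definition st4 :: "complex \<Rightarrow> complex \<Rightarrow> complex \<Rightarrow> complex \<Rightarrow> state2" where
  "st4 a b c d = (\<lambda>(i,j). mk a b c d i j)"

lemma mk_simps[simp]: "mk a b c d 0 0 = a" "mk a b c d 0 1 = b" "mk a b c d 1 0 = c" "mk a b c d 1 1 = d"
  by (simp_all add: mk_def)
lemma st4_simps[simp]: "st4 a b c d (0,0) = a" "st4 a b c d (0,1) = b" "st4 a b c d (1,0) = c" "st4 a b c d (1,1) = d"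
  by (simp_all add: st4_def)

lemma st_eqI: fixes f g :: state2
  assumes "f (0,0) = g (0,0)" "f (0,1) = g (0,1)" "f (1,0) = g (1,0)" "f (1,1) = g (1,1)"
  shows "f = g"
proof
  fix x :: "2\<times>2" obtain i j where x: "x = (i,j)" by fastforce
  show "f x = g x" using assms ex2[of i] ex2[of j] unfolding x by auto
qed

lemma apply_mk:
  "apply_op (tensor (mk a00 a01 a10 a11) (mk b00 b01 b10 b11)) (st4 m00 m01 m10 m11) =
   st4 (a00*(b00*m00 + b01*m01) + a01*(b00*m10 + b01*m11))
       (a00*(b10*m00 + b11*m01) + a01*(b10*m10 + b11*m11))
       (a10*(b00*m00 + b01*m01) + a11*(b00*m10 + b01*m11))
       (a10*(b10*m00 + b11*m01) + a11*(b10*m10 + b11*m11))"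
  by (rule st_eqI) (simp_all add: apply_op_def tensor_def s22 algebra_simps)

lemma unitary_mk:
  assumes "a*cnj a + b*cnj b = 1" "c*cnj c + d*cnj d = 1" "a*cnj c + b*cnj d = 0"
    "cnj a*a + cnj c*c = 1" "cnj b*b + cnj d*d = 1" "cnj a*b + cnj c*d = 0"
  shows "unitary1 (mk a b c d)"
proof -
  have x: "c*cnj a + d*cnj b = 0" using arg_cong[OF assms(3), of cnj] by (simp add: mult.commute)
  have y: "cnj b*a + cnj d*c = 0" using arg_cong[OF assms(6), of cnj] by (simp add: mult.commute)
  show ?thesis unfolding unitary1_def all2 s2 using assms x y by simp
qed

lemma conj_proj: "mat_mult2 (mat_mult2 W (projector v)) (adjoint2 W) = projector (apply_op W v)"
  unfolding mat_mult2_def projector_def adjoint2_def apply_op_def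
  by (rule ext, rule ext) (simp add: sum_distrib_left sum_distrib_right mult_ac)

lemma conj_add: "mat_mult2 (mat_mult2 W (add_op A B)) (adjoint2 W) =
  add_op (mat_mult2 (mat_mult2 W A) (adjoint2 W)) (mat_mult2 (mat_mult2 W B) (adjoint2 W))"
  unfolding mat_mult2_def add_op_def
  by (rule ext, rule ext) (simp add: algebra_simps sum.distrib)

lemma conj_scale: "mat_mult2 (mat_mult2 W (scale_op c A)) (adjoint2 W) =
  scale_op c (mat_mult2 (mat_mult2 W A) (adjoint2 W))"
  unfolding mat_mult2_def scale_op_def
  by (rule ext, rule ext) (simp add: sum_distrib_left sum_distrib_right mult_ac)

lemma proj_phase: "c * cnj c = 1 \<Longrightarrow> projector (scale_st c v) = projector v"
  unfolding projector_def scale_st_def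
  by (rule ext, rule ext) (simp add: algebra_simps)

lemma add_op_comm: "add_op A B = add_op B A"
  unfolding add_op_def by (simp add: add.commute)

lemma detid: fixes a a' b b' p q r :: complex
  assumes "a*a' + b*b' = 1" "p*(a*a' - b*b') + q*a'*b + r*b'*a = 0"
  shows "(-2*p*a'*b' + q*a'^2 - r*b'^2) * (-2*p*a*b - q*b^2 + r*a^2) = p^2 + q*r"
  using assms by algebra
lemma normid: fixes a a' b b' p q r p' q' r' :: complex
  assumes "a*a' + b*b' = 1" "p*(a*a' - b*b') + q*a'*b + r*b'*a = 0"
   "p'*(a'*a - b'*b) + q'*a*b' + r'*b*a' = 0"
  shows "(-2*p*a'*b' + q*a'^2 - r*b'^2) * (-2*p'*a*b + q'*a^2 - r'*b^2)
       + (-2*p*a*b - q*b^2 + r*a^2) * (-2*p'*a'*b' - q'*b'^2 + r'*a'^2) = 2*p*p' + q*q' + r*r'"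
  using assms by algebra
theorem mainTheorem2:
  fixes \<phi> \<alpha> \<beta> :: real
  assumes "0 \<le> \<phi>" "\<phi> \<le> pi / 2" "0 \<le> \<alpha>" "\<alpha> \<le> pi / 2" "0 \<le> \<beta>" "\<beta> \<le> 2 * pi"
  defines "\<psi>1 \<equiv> scale_st (1 / sqrt 2) (add_st (ket2 0 0) (ket2 1 1))"
    and "\<psi>2 \<equiv> add_st
              (scale_st (cos \<phi>) (add_st (scale_st (cos \<alpha>) (ket2 0 1)) (scale_st (sin \<alpha>) (ket2 1 0))))
              (scale_st (exp (\<i> * \<beta>) * sin \<phi> / sqrt 2) (add_st (ket2 0 0) (scale_st (-1) (ket2 1 1))))"
  shows "\<exists>Va Vb (\<zeta>::real) (\<theta>'::real).
           unitary1 Va \<and> unitary1 Vb \<and> 0 \<le> \<theta>' \<and> \<theta>' \<le> pi / 2 \<and>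
           sin (2 * \<theta>') = cmod (exp (2 * \<i> * \<beta>) * (sin \<phi>)\<^sup>2 + (cos \<phi>)\<^sup>2 * sin (2 * \<alpha>)) \<and>
           apply_op (tensor Va Vb) \<psi>1 = scale_st (1 / sqrt 2) (add_st (ket2 0 1) (ket2 1 0)) \<and>
           apply_op (tensor Va Vb) \<psi>2 =
             scale_st (exp (\<i> * \<zeta>)) (add_st (scale_st (cos \<theta>') (ket2 0 0)) (scale_st (sin \<theta>') (ket2 1 1))) \<and>
           (\<forall>\<nu>1 \<nu>2::real. 0 \<le> \<nu>1 \<and> \<nu>1 \<le> 1 \<and> 0 \<le> \<nu>2 \<and> \<nu>2 \<le> 1 \<and> \<nu>1 + \<nu>2 = 1 \<longrightarrow>
              loc_unitary_equiv
                (add_op (scale_op \<nu>1 (projector \<psi>1)) (scale_op \<nu>2 (projector \<psi>2)))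
                (add_op (scale_op \<nu>2 (projector (add_st (scale_st (cos \<theta>') (ket2 0 0)) (scale_st (sin \<theta>') (ket2 1 1)))))
                        (scale_op \<nu>1 (projector (scale_st (1 / sqrt 2) (add_st (ket2 0 1) (ket2 1 0)))))))"
proof -
  define p where "p = exp (\<i> * complex_of_real \<beta>) * complex_of_real (sin \<phi>) / complex_of_real (sqrt 2)"
  define q where "q = complex_of_real (cos \<phi> * cos \<alpha>)"
  define r where "r = complex_of_real (cos \<phi> * sin \<alpha>)"
  have psi2: "\<psi>2 = st4 p q r (-p)" unfolding \<psi>2_def
    by (rule st_eqI) (simp_all add: add_st_def scale_st_def ket2_def p_def q_def r_def)
  have psi1: "\<psi>1 = st4 (1/sqrt 2) 0 0 (1/sqrt 2)" unfolding \<psi>1_def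
    by (rule st_eqI) (simp_all add: add_st_def scale_st_def ket2_def)
  obtain a b where nab: "a*cnj a + b*cnj b = 1"
    and cond: "p*(a*cnj a - b*cnj b) + q*cnj a*b + r*cnj b*a = 0"
    using zero_diag[of p q r] by blast
  have cond': "cnj p*(cnj a*a - cnj b*b) + cnj q*a*cnj b + cnj r*b*cnj a = 0"
    using arg_cong[OF cond, of cnj] by simp
  define A where "A = -2*p*cnj a*cnj b + q*(cnj a)^2 - r*(cnj b)^2"
  define B where "B = -2*p*a*b - q*b^2 + r*a^2"
  have AB: "A*B = p^2 + q*r" unfolding A_def B_def by (rule detid[OF nab cond])
  have cA: "cnj A = -2*cnj p*a*b + cnj q*a^2 - cnj r*b^2" unfolding A_def by simp
  have cB: "cnj B = -2*cnj p*cnj a*cnj b - cnj q*(cnj b)^2 + cnj r*(cnj a)^2" unfolding B_def by simp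
  have nAB0: "A*cnj A + B*cnj B = 2*p*cnj p + q*cnj q + r*cnj r"
    unfolding cA cB unfolding A_def B_def by (rule normid[OF nab cond cond'])
  have pp: "p * cnj p = complex_of_real ((sin \<phi>)^2 / 2)"
  proof -
    have "cmod p = \<bar>sin \<phi>\<bar> / sqrt 2" unfolding p_def
      by (simp add: norm_mult norm_divide)
    then have "(cmod p)^2 = (sin \<phi>)^2 / 2" by (simp add: power_divide)
    then have "complex_of_real ((cmod p)^2) = complex_of_real ((sin \<phi>)^2 / 2)" by (simp only:)
    then show ?thesis using complex_norm_square[of p] by simp
  qed
  have rr: "(sin \<phi>)^2 + (cos \<phi>)^2 * ((cos \<alpha>)^2 + (sin \<alpha>)^2) = 1" by simp
  have rrc: "(complex_of_real (sin \<phi>))^2 + (complex_of_real (cos \<phi>))^2 * ((complex_of_real (cos \<alpha>))^2 + (complex_of_real (sin \<alpha>))^2) = 1"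
    using arg_cong[OF rr, of complex_of_real] by (simp only: of_real_add of_real_mult of_real_power of_real_1)
  have "2*p*cnj p + q*cnj q + r*cnj r = 2*(p*cnj p) + (complex_of_real (cos \<phi>))^2 * ((complex_of_real (cos \<alpha>))^2 + (complex_of_real (sin \<alpha>))^2)"
    unfolding q_def r_def by (simp add: power2_eq_square algebra_simps)
  also have "\<dots> = 1" using pp rrc by (simp add: mult.commute)
  finally have nAB: "A*cnj A + B*cnj B = 1" using nAB0 by simp
  have nAB': "(cmod A)^2 + (cmod B)^2 = 1"
  proof -
    have "complex_of_real ((cmod A)^2 + (cmod B)^2) = 1"
      using nAB by (simp only: of_real_add complex_norm_square)
    then show ?thesis by (metis of_real_1 of_real_eq_iff)
  qed
  define uA where "uA = (if A = 0 then 1 else A / complex_of_real (cmod A))"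
  define uB where "uB = (if B = 0 then 1 else B / complex_of_real (cmod B))"
  have cmuA: "cmod uA = 1" unfolding uA_def by (simp add: norm_divide)
  have uA1: "uA * cnj uA = 1" using complex_norm_square[of uA] cmuA by simp
  have cmuB: "cmod uB = 1" unfolding uB_def by (simp add: norm_divide)
  have uB1: "uB * cnj uB = 1" using complex_norm_square[of uB] cmuB by simp
  have Au: "A = uA * complex_of_real (cmod A)" unfolding uA_def by auto
  have Bu: "B = uB * complex_of_real (cmod B)" unfolding uB_def by auto
  define e where "e = csqrt (uA * cnj uB)"
  have ee: "e * e = uA * cnj uB" unfolding e_def using power2_csqrt[of "uA * cnj uB"]
    by (simp add: power2_eq_square)
  have cme: "cmod e = 1" unfolding e_def using cmuA cmuB by (simp add: norm_mult)
  have e1: "e * cnj e = 1" using complex_norm_square[of e] cme by simp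
  have e1': "cnj e * e = 1" using e1 by (simp add: mult.commute)
  define \<omega> where "\<omega> = e * uB"
  have om: "cnj e * uA = \<omega>"
  proof -
    have "cnj e * uA = cnj e * uA * (uB * cnj uB)" using uB1 by simp
    also have "\<dots> = cnj e * (e * e) * uB" using ee by (simp add: algebra_simps)
    also have "\<dots> = \<omega>" unfolding \<omega>_def using e1' by (simp add: algebra_simps)
    finally show ?thesis .
  qed
  have cmom: "cmod \<omega> = 1" unfolding \<omega>_def using cme cmuB by (simp add: norm_mult)
  define \<zeta> where "\<zeta> = Arg \<omega>"
  have expz: "exp (\<i> * complex_of_real \<zeta>) = \<omega>"
  proof -
    have "\<omega> \<noteq> 0" using cmom by auto
    then have "cis \<zeta> = sgn \<omega>" unfolding \<zeta>_def by (rule cis_Arg)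
    then show ?thesis using cmom by (simp add: cis_conv_exp sgn_div_norm)
  qed
  define \<theta> where "\<theta> = arccos (cmod A)"
  have cAle: "cmod A \<le> 1" using nAB'
    by (metis abs_norm_cancel abs_square_le_1 le_add_same_cancel1 zero_le_power2)
  have cAge: "-1 \<le> cmod A" using norm_ge_zero[of A] by linarith
  have cos\<theta>: "cos \<theta> = cmod A" unfolding \<theta>_def using cos_arccos[OF cAge cAle] .
  have sin\<theta>: "sin \<theta> = cmod B"
  proof -
    have "sin \<theta> = sqrt (1 - (cmod A)^2)" unfolding \<theta>_def by (rule sin_arccos_abs) (use cAle in simp)
    also have "1 - (cmod A)^2 = (cmod B)^2" using nAB' by simp
    finally show ?thesis by simp
  qed
  have th0: "0 \<le> \<theta>" unfolding \<theta>_def using arccos_lbound[OF cAge cAle] .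
  have th1: "\<theta> \<le> pi/2" unfolding \<theta>_def using arccos_le_pi2[OF norm_ge_zero cAle] .
  have sin2: "sin (2*\<theta>) = cmod (exp (2 * \<i> * \<beta>) * (sin \<phi>)\<^sup>2 + (cos \<phi>)\<^sup>2 * sin (2 * \<alpha>))"
  proof -
    define E where "E = exp (\<i> * complex_of_real \<beta>)"
    define S where "S = complex_of_real (sin \<phi>)"
    have "2 * \<i> * complex_of_real \<beta> = \<i> * complex_of_real \<beta> + \<i> * complex_of_real \<beta>" by simp
    then have E2: "exp (2 * \<i> * complex_of_real \<beta>) = E * E"
      unfolding E_def by (simp only: exp_add)
    have r2: "(complex_of_real (sqrt 2))^2 = 2"
      by (metis of_real_numeral of_real_power real_sqrt_pow2 zero_le_numeral)
    have "p^2 = (E * S)^2 / (complex_of_real (sqrt 2))^2"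
      unfolding p_def E_def S_def by (simp only: power_divide)
    then have "p^2 = (E * S)^2 / 2" using r2 by simp
    then have p2: "2 * p^2 = E * E * S^2" by (simp add: power2_eq_square mult_ac)
    have qr2: "2 * (q * r) = (complex_of_real (cos \<phi>))^2 * complex_of_real (sin (2 * \<alpha>))"
      unfolding q_def r_def sin_double by (simp add: power2_eq_square mult_ac)
    have "exp (2 * \<i> * complex_of_real \<beta>) * (complex_of_real (sin \<phi>))^2 + (complex_of_real (cos \<phi>))^2 * complex_of_real (sin (2 * \<alpha>))
        = 2 * (p^2 + q*r)"
      unfolding E2 distrib_left p2 qr2 S_def ..
    also have "\<dots> = 2 * (A * B)" using AB by simp
    finally have "cmod (exp (2 * \<i> * complex_of_real \<beta>) * (complex_of_real (sin \<phi>))^2 + (complex_of_real (cos \<phi>))^2 * complex_of_real (sin (2 * \<alpha>))) = 2 * cmod A * cmod B"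
      by (simp add: norm_mult)
    then show ?thesis using cos\<theta> sin\<theta> by (simp add: sin_double)
  qed
  define Va where "Va = mk (cnj a) (cnj b) (-e*b) (e*a)"
  define Vb where "Vb = mk (-cnj e*cnj b) (cnj e*cnj a) a b"
  have nab': "cnj a*a + cnj b*b = 1" using nab by (simp add: mult.commute)
  have uVa: "unitary1 Va" unfolding Va_def
    by (rule unitary_mk) (use nab nab' e1 e1' in \<open>simp_all add: algebra_simps\<close>)
  have uVb: "unitary1 Vb" unfolding Vb_def
    by (rule unitary_mk) (use nab nab' e1 e1' in \<open>simp_all add: algebra_simps\<close>)
  have img1: "apply_op (tensor Va Vb) \<psi>1 = scale_st (1 / sqrt 2) (add_st (ket2 0 1) (ket2 1 0))"
  proof -
    have "scale_st (1 / sqrt 2) (add_st (ket2 0 1) (ket2 1 0)) = st4 0 (1/sqrt 2) (1/sqrt 2) 0"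
      by (rule st_eqI) (simp_all add: add_st_def scale_st_def ket2_def)
    moreover have "apply_op (tensor Va Vb) \<psi>1 = st4 0 (1/sqrt 2) (1/sqrt 2) 0"
      unfolding psi1 Va_def Vb_def apply_mk
    proof -
      have x1: "cnj a * a + cnj b * b = 1" by (rule nab')
      have x2: "e * cnj e * (b * cnj b + a * cnj a) = 1" using nab e1 by (simp add: algebra_simps)
      show "st4 (cnj a * (- cnj e * cnj b * (1/sqrt 2) + cnj e * cnj a * 0) + cnj b * (- cnj e * cnj b * 0 + cnj e * cnj a * (1/sqrt 2)))
     (cnj a * (a * (1/sqrt 2) + b * 0) + cnj b * (a * 0 + b * (1/sqrt 2)))
     (- e * b * (- cnj e * cnj b * (1/sqrt 2) + cnj e * cnj a * 0) + e * a * (- cnj e * cnj b * 0 + cnj e * cnj a * (1/sqrt 2)))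
     (- e * b * (a * (1/sqrt 2) + b * 0) + e * a * (a * 0 + b * (1/sqrt 2))) =
    st4 0 (1/sqrt 2) (1/sqrt 2) 0"
        using x1 x2 nab by (simp add: algebra_simps) (simp add: add_divide_distrib[symmetric] nab)
    qed
    ultimately show ?thesis by simp
  qed
  define \<psi>1' where "\<psi>1' = add_st (scale_st (cos \<theta>) (ket2 0 0)) (scale_st (sin \<theta>) (ket2 1 1))"
  have img2: "apply_op (tensor Va Vb) \<psi>2 = scale_st (exp (\<i> * \<zeta>)) \<psi>1'"
  proof -
    have "scale_st (exp (\<i> * \<zeta>)) \<psi>1' = st4 (\<omega> * cmod A) 0 0 (\<omega> * cmod B)"
      unfolding \<psi>1'_def expz
      by (rule st_eqI) (simp_all add: add_st_def scale_st_def ket2_def cos\<theta> sin\<theta> expz)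
    moreover have "apply_op (tensor Va Vb) \<psi>2 = st4 (cnj e * A) 0 0 (e * B)"
      unfolding psi2 Va_def Vb_def apply_mk
    proof (rule arg_cong4[where f=st4])
      show "cnj a * (- cnj e * cnj b * p + cnj e * cnj a * q) + cnj b * (- cnj e * cnj b * r + cnj e * cnj a * - p) = cnj e * A"
        unfolding A_def by (simp add: algebra_simps power2_eq_square)
      show "- e * b * (a * p + b * q) + e * a * (a * r + b * - p) = e * B"
        unfolding B_def by (simp add: algebra_simps power2_eq_square)
      show "cnj a * (a * p + b * q) + cnj b * (a * r + b * - p) = 0"
        using cond by (simp add: algebra_simps)
      have "- e * b * (- cnj e * cnj b * p + cnj e * cnj a * q) + e * a * (- cnj e * cnj b * r + cnj e * cnj a * - p)
          = - (e * cnj e) * (p*(a*cnj a - b*cnj b) + q*cnj a*b + r*cnj b*a)"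
        by (simp add: algebra_simps)
      then show "- e * b * (- cnj e * cnj b * p + cnj e * cnj a * q) + e * a * (- cnj e * cnj b * r + cnj e * cnj a * - p) = 0"
        using cond by simp
    qed
    moreover have "cnj e * A = \<omega> * cmod A" using om Au by (metis mult.assoc)
    moreover have "e * B = \<omega> * cmod B" unfolding \<omega>_def using Bu by (metis mult.assoc)
    ultimately show ?thesis by simp
  qed
  have ez1: "exp (\<i> * complex_of_real \<zeta>) * cnj (exp (\<i> * complex_of_real \<zeta>)) = 1"
    using expz cmom complex_norm_square[of \<omega>] by simp
  show ?thesis
  proof (intro exI conjI allI impI)
    show "unitary1 Va" "unitary1 Vb" "0 \<le> \<theta>" "\<theta> \<le> pi/2" by (fact uVa uVb th0 th1)+
    show "sin (2*\<theta>) = cmod (exp (2 * \<i> * \<beta>) * (sin \<phi>)\<^sup>2 + (cos \<phi>)\<^sup>2 * sin (2 * \<alpha>))" by (fact sin2)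
    show "apply_op (tensor Va Vb) \<psi>1 = scale_st (1 / sqrt 2) (add_st (ket2 0 1) (ket2 1 0))" by (fact img1)
    show "apply_op (tensor Va Vb) \<psi>2 = scale_st (exp (\<i> * \<zeta>)) (add_st (scale_st (cos \<theta>) (ket2 0 0)) (scale_st (sin \<theta>) (ket2 1 1)))"
      using img2 unfolding \<psi>1'_def .
    fix \<nu>1 \<nu>2 :: real
    show "loc_unitary_equiv
                (add_op (scale_op \<nu>1 (projector \<psi>1)) (scale_op \<nu>2 (projector \<psi>2)))
                (add_op (scale_op \<nu>2 (projector (add_st (scale_st (cos \<theta>) (ket2 0 0)) (scale_st (sin \<theta>) (ket2 1 1)))))
                        (scale_op \<nu>1 (projector (scale_st (1 / sqrt 2) (add_st (ket2 0 1) (ket2 1 0))))))"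
      unfolding loc_unitary_equiv_def
      apply (rule exI[of _ Va], rule exI[of _ Vb])
      using uVa uVb img1 img2 ez1
      by (simp add: conj_add conj_scale conj_proj proj_phase \<psi>1'_def add_op_comm)
  qed
qed

end
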